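(* Let $G$ be a connected graph with adjacency matrix $A$, degree vector $d$, $D=\mathrm{diag}(d)$ and $P=D^{-1}A$. Let $e=(i,j)$, $i\neq j$, be an edge with $a_{ij}>0$ which is not a cut-edge (so that $d_i-a_{ij}>0$ and $d_j-a_{ij}>0$). Let $U=[e_i\ \ e_j]\in\mathbb{R}^{n\times 2}$, let \[ V^T=\begin{bmatrix} s_i&0\\0&s_j\end{bmatrix}U^TA-a_{ij}\begin{bmatrix}0&(d_i-a_{ij})^{-1}\\(d_j-a_{ij})^{-1}&0\end{bmatrix}U^T\in\mathbb{R}^{2\times n},\qquad s_i=\frac{a_{ij}}{d_i(d_i-a_{ij})},\ s_j=\frac{a_{ij}}{d_j(d_j-a_{ij})}, \] let $h\in\mathbb{R}^n$ with $h^T\mathbf 1=1$, and $Z=(I-P+\mathbf 1h^T)^{-1}$. Then $\widehat P=P+UV^T$, the $2\times 2$ matrix $I-V^TZU$ is invertible, and \[ c(e)=\operatorname{Tr}\big((I-V^TZU)^{-1}V^TZ^2U\big). \]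
   Context: Graphs are undirected and possibly weighted on vertex set $\{1,\dots,n\}$, with symmetric nonnegative adjacency matrix $A=(a_{k\ell})$; $d=A\mathbf 1$ (all entries assumed positive), $D=\mathrm{diag}(d)$, $P=D^{-1}A$; $e_k$ is the $k$-th column of the identity and $\mathbf 1$ the all-ones vector. $G$ connected means $P$ irreducible. For an irreducible row-stochastic matrix $Q$ with stationary vector $\pi$, the Kemeny constant is $K(Q)=\sum_j\pi_j m_{kj}$, where $m_{kj}$ is the expected first passage time from $k$ to $j$ ($m_{kk}=0$), independent of $k$; equivalently $K(Q)=\sum_{\ell=2}^n 1/(1-\lambda_\ell)$, where $1=\lambda_1,\lambda_2,\dots,\lambda_n$ are the eigenvalues of $Q$. Removing edge $e=(i,j)$ means replacing $A$ by $\widehat A=A-a_{ij}(e_ie_j^T+e_je_i^T)$; set $\widehat d=\widehat A\mathbf 1$, $\widehat D=\mathrm{diag}(\widehat d)$, $\widehat P=\widehat D^{-1}\widehat A$. The edge $e$ is a cut-edge if the graph with adjacency matrix $\widehat A$ is disconnected. The Kemeny-based centrality score is $c(e)=K(\widehat P)-K(P)$. *)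

theory Defs
  imports "Jordan_Normal_Form.Jordan_Normal_Form" "HOL-Library.Multiset"
begin

text \<open>Vertices are indexed 0..n-1 (instead of 1..n).  Matrices are Jordan_Normal_Form matrices.\<close>

definition ones :: "nat \<Rightarrow> real vec" where
  "ones n = vec n (\<lambda>_. 1)"

definition outer :: "real vec \<Rightarrow> real vec \<Rightarrow> real mat" where
  "outer v w = mat (dim_vec v) (dim_vec w) (\<lambda>(k,l). v $ k * w $ l)"

definition degvec :: "real mat \<Rightarrow> real vec" where
  "degvec A = A *\<^sub>v ones (dim_col A)"

definition trans_mat :: "real mat \<Rightarrow> real mat" where
  "trans_mat A = mat_diag (dim_row A) (\<lambda>k. inverse (degvec A $ k)) * A"

definition irreducible_mat :: "real mat \<Rightarrow> bool" where
  "irreducible_mat Q \<longleftrightarrow> square_mat Q \<and>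
     (\<forall>k < dim_row Q. \<forall>l < dim_row Q. \<exists>m. (Q ^\<^sub>m m) $$ (k,l) > 0)"

definition connected_graph :: "real mat \<Rightarrow> bool" where
  "connected_graph A \<longleftrightarrow> irreducible_mat (trans_mat A)"

definition remove_edge :: "real mat \<Rightarrow> nat \<Rightarrow> nat \<Rightarrow> real mat" where
  "remove_edge A i j = A - A $$ (i,j) \<cdot>\<^sub>m
     (outer (unit_vec (dim_row A) i) (unit_vec (dim_row A) j)
      + outer (unit_vec (dim_row A) j) (unit_vec (dim_row A) i))"

definition cut_edge :: "real mat \<Rightarrow> nat \<Rightarrow> nat \<Rightarrow> bool" where
  "cut_edge A i j \<longleftrightarrow> \<not> connected_graph (remove_edge A i j)"

text \<open>Kemeny constant: sum of 1/(1-lambda) over the eigenvalues lambda_2..lambda_n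
  (with algebraic multiplicity), i.e. over all roots of the characteristic polynomial
  with one copy of the eigenvalue 1 removed.\<close>
definition kemeny :: "real mat \<Rightarrow> complex" where
  "kemeny Q = sum_mset (image_mset (\<lambda>z. 1 / (1 - z))
                (proots (char_poly (map_mat complex_of_real Q)) - {#1#}))"

definition kemeny_centrality :: "real mat \<Rightarrow> nat \<Rightarrow> nat \<Rightarrow> complex" where
  "kemeny_centrality A i j = kemeny (trans_mat (remove_edge A i j)) - kemeny (trans_mat A)"

definition mat_inv :: "real mat \<Rightarrow> real mat" where
  "mat_inv M = (SOME B. B \<in> carrier_mat (dim_row M) (dim_row M) \<and> inverts_mat M B \<and> inverts_mat B M)"

definition trace_mat :: "real mat \<Rightarrow> real" where
  "trace_mat M = (\<Sum>k < dim_row M. M $$ (k,k))"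

end

theory Submission
  imports Defs "Jordan_Normal_Form.Schur_Decomposition"
begin



declare minus_carrier_mat[simp]

lemma proots_lin: "proots (\<Prod>a\<leftarrow>as. [:- a, 1:]) = mset (as :: complex list)"
proof (induction as)
  case (Cons a as)
  have nz: "(\<Prod>a\<leftarrow>as. [:- a, 1:]) \<noteq> (0 :: complex poly)"
    by (auto simp: prod_list_zero_iff)
  have "proots (\<Prod>a\<leftarrow>a # as. [:- a, 1:]) = proots ([:- a, 1:] * (\<Prod>a\<leftarrow>as. [:- a, 1:]))" by simp
  also have "\<dots> = proots [:- a, 1:] + proots (\<Prod>a\<leftarrow>as. [:- a, 1:])"
    by (rule proots_mult) (use nz in auto)
  finally show ?case using Cons by simp
qed simp

lemma char_poly_tri_exists:
  fixes A :: "complex mat"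
  assumes A: "A \<in> carrier_mat m m"
  shows "\<exists>B P Q. B \<in> carrier_mat m m \<and> P \<in> carrier_mat m m \<and> Q \<in> carrier_mat m m
     \<and> upper_triangular B \<and> P * Q = 1\<^sub>m m \<and> Q * P = 1\<^sub>m m \<and> A = P * B * Q"
proof -
  obtain as where cA: "char_poly A = (\<Prod>a\<leftarrow>as. [:- a, 1:])" using char_poly_factorized[OF A] by blast
  obtain B where B: "B \<in> carrier_mat m m" "upper_triangular B" "similar_mat A B"
    using schur_decomposition_exists[OF A cA] by blast
  from similar_matD[OF B(3)] obtain n' P Q where
    c: "{A, B, P, Q} \<subseteq> carrier_mat n' n'" "P * Q = 1\<^sub>m n'" "Q * P = 1\<^sub>m n'" "A = P * B * Q" by blast
  have "n' = m" using c(1) A by auto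
  thus ?thesis using c B by blast
qed

lemma proots_char_poly_tri:
  fixes B :: "complex mat"
  assumes "B \<in> carrier_mat m m" "upper_triangular B"
  shows "proots (char_poly B) = mset (diag_mat B)"
  using char_poly_upper_triangular[OF assms] proots_lin by simp

lemma proots_one_minus:
  fixes A :: "complex mat"
  assumes A: "A \<in> carrier_mat m m"
  shows "proots (char_poly (1\<^sub>m m - A)) = image_mset (\<lambda>z. 1 - z) (proots (char_poly A))"
proof -
  obtain B P Q where BPQ: "B \<in> carrier_mat m m" "P \<in> carrier_mat m m" "Q \<in> carrier_mat m m"
     "upper_triangular B" "P * Q = 1\<^sub>m m" "Q * P = 1\<^sub>m m" "A = P * B * Q"
    using char_poly_tri_exists[OF A] by blast
  have simA: "similar_mat A B" using BPQ by (intro similar_matI[of _ _ P Q m]) auto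
  have eq: "1\<^sub>m m - A = P * (1\<^sub>m m - B) * Q"
  proof -
    have "P * (1\<^sub>m m - B) = P * 1\<^sub>m m - P * B"
      using BPQ by (intro mult_minus_distrib_mat) auto
    hence "P * (1\<^sub>m m - B) * Q = (P - P * B) * Q" using BPQ by simp
    also have "\<dots> = P * Q - P * B * Q"
      using BPQ by (intro minus_mult_distrib_mat) auto
    finally show ?thesis using BPQ by simp
  qed
  have sim2: "similar_mat (1\<^sub>m m - A) (1\<^sub>m m - B)"
    using BPQ eq by (intro similar_matI[of _ _ P Q m]) auto
  have ut: "upper_triangular (1\<^sub>m m - B)"
    using BPQ(1,4) by (intro upper_triangularI) auto
  have dg: "diag_mat (1\<^sub>m m - B) = map (\<lambda>z. 1 - z) (diag_mat B)"
    using BPQ(1) by (simp add: diag_mat_def)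
  have "proots (char_poly (1\<^sub>m m - A)) = mset (diag_mat (1\<^sub>m m - B))"
    using char_poly_similar[OF sim2] proots_char_poly_tri[OF _ ut, of m] BPQ(1) by auto
  also have "\<dots> = image_mset (\<lambda>z. 1 - z) (mset (diag_mat B))" using dg by simp
  also have "mset (diag_mat B) = proots (char_poly A)"
    using char_poly_similar[OF simA] proots_char_poly_tri[OF BPQ(1,4)] by simp
  finally show ?thesis .
qed




lemma mult_entry: "A \<in> carrier_mat nr m \<Longrightarrow> B \<in> carrier_mat m nc \<Longrightarrow> k < nr \<Longrightarrow> l < nc \<Longrightarrow>
  (A * B) $$ (k,l) = (\<Sum>r<m. A $$ (k,r) * B $$ (r,l))"
  by (auto simp: scalar_prod_def lessThan_atLeast0 intro!: sum.cong)

lemma trace_comm: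
  fixes A :: "'a::comm_ring_1 mat"
  assumes "A \<in> carrier_mat n m" "B \<in> carrier_mat m n"
  shows "(\<Sum>k<n. (A * B) $$ (k,k)) = (\<Sum>k<m. (B * A) $$ (k,k))"
proof -
  have "(\<Sum>k<n. (A * B) $$ (k,k)) = (\<Sum>k<n. \<Sum>r<m. A $$ (k,r) * B $$ (r,k))"
    using assms by (intro sum.cong refl mult_entry) auto
  also have "\<dots> = (\<Sum>r<m. \<Sum>k<n. B $$ (r,k) * A $$ (k,r))"
    by (subst sum.swap) (simp add: mult.commute)
  also have "\<dots> = (\<Sum>k<m. (B * A) $$ (k,k))"
    using assms by (intro sum.cong refl mult_entry[symmetric]) auto
  finally show ?thesis .
qed

lemma tri_inv_diag:
  fixes T W :: "'a::field mat"
  assumes T: "T \<in> carrier_mat n n" and ut: "upper_triangular T"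
    and W: "W \<in> carrier_mat n n" and WT: "W * T = 1\<^sub>m n"
  shows "l < n \<Longrightarrow> (\<forall>k. l < k \<and> k < n \<longrightarrow> W $$ (k,l) = 0) \<and> W $$ (l,l) * T $$ (l,l) = 1"
proof (induction l rule: less_induct)
  case (less l)
  have key: "(W * T) $$ (k,l) = W $$ (k,l) * T $$ (l,l)" if k: "l \<le> k" "k < n" for k
  proof -
    have "(W * T) $$ (k,l) = (\<Sum>r<n. W $$ (k,r) * T $$ (r,l))"
      using T W k less.prems by (intro mult_entry) auto
    also have "\<dots> = W $$ (k,l) * T $$ (l,l) + (\<Sum>r\<in>{..<n}-{l}. W $$ (k,r) * T $$ (r,l))"
      using less.prems by (subst sum.remove[of _ l]) auto
    also have "(\<Sum>r\<in>{..<n}-{l}. W $$ (k,r) * T $$ (r,l)) = 0"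
    proof (intro sum.neutral ballI)
      fix r assume r0: "r \<in> {..<n}-{l}"
      hence r: "r < n" "r \<noteq> l" by auto
      show "W $$ (k,r) * T $$ (r,l) = 0"
      proof (cases "r < l")
        case True
        with less.IH[of r] less.prems k have "W $$ (k,r) = 0" by auto
        thus ?thesis by simp
      next
        case False
        with r have "l < r" by auto
        with ut T r have "T $$ (r,l) = 0" by auto
        thus ?thesis by simp
      qed
    qed
    finally show ?thesis by simp
  qed
  have "W $$ (l,l) * T $$ (l,l) = 1"
    using key[of l] WT less.prems by simp
  moreover have "W $$ (k,l) = 0" if "l < k" "k < n" for k
  proof -
    have "W $$ (k,l) * T $$ (l,l) = 0" using key[of k] WT that less.prems by simp
    moreover have "T $$ (l,l) \<noteq> 0" using \<open>W $$ (l,l) * T $$ (l,l) = 1\<close> by auto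
    ultimately show ?thesis by simp
  qed
  ultimately show ?case by blast
qed

lemma trace_inverse_proots:
  fixes M N :: "complex mat"
  assumes M: "M \<in> carrier_mat n n" and N: "N \<in> carrier_mat n n" and MN: "M * N = 1\<^sub>m n"
  shows "(\<Sum>k<n. N $$ (k,k)) = sum_mset (image_mset (\<lambda>z. 1 / z) (proots (char_poly M)))"
proof -
  obtain T P Q where TPQ: "T \<in> carrier_mat n n" "P \<in> carrier_mat n n" "Q \<in> carrier_mat n n"
     "upper_triangular T" "P * Q = 1\<^sub>m n" "Q * P = 1\<^sub>m n" "M = P * T * Q"
    using char_poly_tri_exists[OF M] by blast
  have simM: "similar_mat M T" using TPQ by (intro similar_matI[of _ _ P Q n]) auto
  have QPX: "Q * (P * X) = X" if "X \<in> carrier_mat n n" for X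
  proof -
    have "Q * (P * X) = (Q * P) * X" by (rule assoc_mult_mat[symmetric, of Q n n P n X n]) (use that TPQ in auto)
    thus ?thesis using that TPQ by simp
  qed
  have PQX: "P * (Q * X) = X" if "X \<in> carrier_mat n n" for X
  proof -
    have "P * (Q * X) = (P * Q) * X" by (rule assoc_mult_mat[symmetric, of P n n Q n X n]) (use that TPQ in auto)
    thus ?thesis using that TPQ by simp
  qed
  have MNX: "M * (N * X) = X" if "X \<in> carrier_mat n n" for X
  proof -
    have "M * (N * X) = (M * N) * X" by (rule assoc_mult_mat[symmetric, of M n n N n X n]) (use that M N MN in auto)
    thus ?thesis using that M N MN by simp
  qed
  define W where "W = Q * N * P"
  have Wc: "W \<in> carrier_mat n n" using TPQ N by (simp add: W_def)
  have Teq: "T = Q * (M * P)"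
  proof -
    have "M * P = P * (T * (Q * P))" using TPQ by (simp add: assoc_mult_mat[of _ n n _ n _ n])
    also have "\<dots> = P * T" using TPQ by simp
    finally show ?thesis using TPQ by (simp add: QPX)
  qed
  have TW: "T * W = 1\<^sub>m n" unfolding Teq W_def using TPQ(1-6) M N
    by (simp add: QPX PQX MNX assoc_mult_mat[of _ n n _ n _ n])
  have WT: "W * T = 1\<^sub>m n" by (rule mat_mult_left_right_inverse[OF TPQ(1) Wc TW])
  have NPWQ: "N = P * W * Q"
    unfolding W_def using TPQ N by (simp add: QPX PQX)
  have "(\<Sum>k<n. N $$ (k,k)) = (\<Sum>k<n. (P * (W * Q)) $$ (k,k))"
    using NPWQ TPQ Wc by (simp add: assoc_mult_mat[of _ n n _ n _ n])
  also have "\<dots> = (\<Sum>k<n. ((W * Q) * P) $$ (k,k))"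
    using TPQ Wc by (intro trace_comm) auto
  also have "\<dots> = (\<Sum>k<n. W $$ (k,k))" using TPQ Wc by (simp add: assoc_mult_mat[of _ n n _ n _ n])
  also have "\<dots> = (\<Sum>k<n. 1 / T $$ (k,k))"
  proof (intro sum.cong refl)
    fix x assume "x \<in> {..<n}"
    hence "W $$ (x,x) * T $$ (x,x) = 1" using tri_inv_diag[OF TPQ(1,4) Wc WT, of x] by auto
    thus "W $$ (x,x) = 1 / T $$ (x,x)" by (metis divide_eq_eq mult_eq_0_iff zero_neq_one)
  qed
  also have "\<dots> = sum_list (map (\<lambda>z. 1 / z) (diag_mat T))"
    using TPQ(1) by (simp add: diag_mat_def interv_sum_list_conv_sum_set_nat lessThan_atLeast0 comp_def)
  also have "\<dots> = sum_mset (image_mset (\<lambda>z. 1 / z) (proots (char_poly M)))"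
    using char_poly_similar[OF simM] proots_char_poly_tri[OF TPQ(1,4)]
    by (simp add: mset_map[symmetric] sum_mset_sum_list del: mset_map)
  finally show ?thesis .
qed




lemma char_poly_nonzero: "A \<in> carrier_mat n n \<Longrightarrow> char_poly (A :: 'a :: comm_ring_1 mat) \<noteq> 0"
  using degree_monic_char_poly[of A n] by (metis coeff_0 zero_neq_one)

lemma char_poly_first_col:
  fixes X :: "complex mat"
  assumes X: "X \<in> carrier_mat (Suc m) (Suc m)"
    and col0: "\<And>k. k < Suc m \<Longrightarrow> X $$ (k,0) = (if k = 0 then 1 else 0)"
  shows "char_poly X = [:-1,1:] * char_poly (mat m m (\<lambda>(i,j). X $$ (i+1,j+1)))"
proof -
  let ?X1 = "mat 1 1 (\<lambda>_. 1) :: complex mat"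
  let ?X2 = "mat 1 m (\<lambda>(i,j). X $$ (0,j+1))"
  let ?X4 = "mat m m (\<lambda>(i,j). X $$ (i+1,j+1))"
  have eq: "X = four_block_mat ?X1 ?X2 (0\<^sub>m m 1) ?X4"
  proof (rule eq_matI)
    fix k l assume kl: "k < dim_row (four_block_mat ?X1 ?X2 (0\<^sub>m m 1) ?X4)"
       "l < dim_col (four_block_mat ?X1 ?X2 (0\<^sub>m m 1) ?X4)"
    hence kl': "k < Suc m" "l < Suc m" by auto
    show "X $$ (k,l) = four_block_mat ?X1 ?X2 (0\<^sub>m m 1) ?X4 $$ (k,l)"
      using kl' col0[of k] by (cases k; cases l) auto
  qed (use X in auto)
  have "char_poly X = char_poly ?X1 * char_poly ?X4"
    by (subst eq, rule char_poly_four_block_zeros_col) auto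
  moreover have "char_poly ?X1 = [:-1,1:]"
  proof -
    have "upper_triangular ?X1" by auto
    from char_poly_upper_triangular[OF _ this, of 1]
    show ?thesis by (simp add: diag_mat_def)
  qed
  ultimately show ?thesis by simp
qed




definition Sm :: "nat \<Rightarrow> complex mat" where
  "Sm n = mat n n (\<lambda>(k,l). if l = 0 then 1 else if k = l then 1 else 0)"
definition Sinvm :: "nat \<Rightarrow> complex mat" where
  "Sinvm n = mat n n (\<lambda>(k,l). if l = 0 then (if k = 0 then 1 else -1) else if k = l then 1 else 0)"

lemma Sm_carrier[simp]: "Sm n \<in> carrier_mat n n" and Sinvm_carrier[simp]: "Sinvm n \<in> carrier_mat n n"
  by (auto simp: Sm_def Sinvm_def)

lemma Sinvm_mult:
  assumes B: "B \<in> carrier_mat n nc" and k: "k < n" and l: "l < nc"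
  shows "(Sinvm n * B) $$ (k,l) = (if k = 0 then B $$ (0,l) else B $$ (k,l) - B $$ (0,l))"
proof -
  have "(Sinvm n * B) $$ (k,l) = (\<Sum>r<n. Sinvm n $$ (k,r) * B $$ (r,l))"
    using B k l by (intro mult_entry) auto
  also have "\<dots> = (if k = 0 then B $$ (0,l) else B $$ (k,l) - B $$ (0,l))"
  proof (cases "k = 0")
    case True
    have "(\<Sum>r<n. Sinvm n $$ (k,r) * B $$ (r,l)) = (\<Sum>r<n. if r = 0 then B $$ (r,l) else 0)"
      using k True by (intro sum.cong refl) (auto simp: Sinvm_def)
    thus ?thesis using True k by (simp add: sum.delta')
  next
    case False
    have "(\<Sum>r<n. Sinvm n $$ (k,r) * B $$ (r,l))
       = (\<Sum>r<n. (if r = k then B $$ (r,l) else 0) - (if r = 0 then B $$ (r,l) else 0))"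
      using k False by (intro sum.cong refl) (auto simp: Sinvm_def)
    also have "\<dots> = B $$ (k,l) - B $$ (0,l)"
      using k False by (simp add: sum_subtractf sum.delta')
    finally show ?thesis using False by simp
  qed
  finally show ?thesis .
qed

lemma mult_Sm:
  assumes B: "B \<in> carrier_mat nr n" and k: "k < nr" and l: "l < n"
  shows "(B * Sm n) $$ (k,l) = (if l = 0 then (\<Sum>r<n. B $$ (k,r)) else B $$ (k,l))"
proof -
  have "(B * Sm n) $$ (k,l) = (\<Sum>r<n. B $$ (k,r) * Sm n $$ (r,l))"
    using B k l by (intro mult_entry) auto
  also have "\<dots> = (\<Sum>r<n. (if l = 0 then B $$ (k,r) else (if r = l then B $$ (k,r) else 0)))"
    using l by (intro sum.cong refl) (auto simp: Sm_def)
  also have "\<dots> = (if l = 0 then (\<Sum>r<n. B $$ (k,r)) else B $$ (k,l))"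
    using l by (auto simp: sum.delta)
  finally show ?thesis .
qed

lemma Sinvm_Sm: "Sinvm n * Sm n = 1\<^sub>m n"
proof (rule eq_matI)
  fix k l assume "k < dim_row (1\<^sub>m n)" "l < dim_col (1\<^sub>m n)"
  hence kl: "k < n" "l < n" by auto
  show "(Sinvm n * Sm n) $$ (k,l) = 1\<^sub>m n $$ (k,l)"
    using kl by (subst Sinvm_mult[OF Sm_carrier]) (auto simp: Sm_def)
qed (auto simp: Sm_def Sinvm_def)

lemma Sm_Sinvm: "Sm n * Sinvm n = 1\<^sub>m n"
  by (rule mat_mult_left_right_inverse[OF _ _ Sinvm_Sm]) auto




lemma Sm_Sinvm_left: "Z \<in> carrier_mat n n \<Longrightarrow> Sm n * (Sinvm n * Z) = Z"
proof -
  assume Z: "Z \<in> carrier_mat n n"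
  have "Sm n * (Sinvm n * Z) = (Sm n * Sinvm n) * Z"
    by (rule assoc_mult_mat[symmetric, of _ n n _ n _ n]) (use Z in auto)
  thus ?thesis using Z by (simp add: Sm_Sinvm)
qed

lemma Sm_Sinvm_right: "Z \<in> carrier_mat n n \<Longrightarrow> Z * Sm n * Sinvm n = Z"
proof -
  assume Z: "Z \<in> carrier_mat n n"
  have "Z * Sm n * Sinvm n = Z * (Sm n * Sinvm n)"
    by (rule assoc_mult_mat[of _ n n _ n _ n]) (use Z in auto)
  thus ?thesis using Z by (simp add: Sm_Sinvm)
qed

lemma kemeny_trace_complex:
  fixes Q N :: "complex mat" and g :: "nat \<Rightarrow> complex"
  assumes Q: "Q \<in> carrier_mat n n" and n: "n > 0"
    and rows: "\<forall>k<n. (\<Sum>l<n. Q $$ (k,l)) = 1"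
    and gs: "(\<Sum>l<n. g l) = 1"
    and N: "N \<in> carrier_mat n n"
    and MN: "mat n n (\<lambda>(k,l). (if k = l then 1 else 0) - Q $$ (k,l) + g l) * N = 1\<^sub>m n"
  shows "sum_mset (image_mset (\<lambda>z. 1 / (1 - z)) (proots (char_poly Q) - {#1#}))
       = (\<Sum>k<n. N $$ (k,k)) - 1"
proof -
  obtain m where nm: "n = Suc m" using n by (cases n) auto
  define M where "M = mat n n (\<lambda>(k,l). (if k = l then 1 else 0) - Q $$ (k,l) + g l)"
  have Mc: "M \<in> carrier_mat n n" by (simp add: M_def)
  define X where "X = Sinvm n * (Q * Sm n)"
  define Y where "Y = Sinvm n * (M * Sm n)"
  have Xc: "X \<in> carrier_mat n n" using Q unfolding X_def by (metis mult_carrier_mat Sm_carrier Sinvm_carrier)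
  have Yc: "Y \<in> carrier_mat n n" using Mc unfolding Y_def by (metis mult_carrier_mat Sm_carrier Sinvm_carrier)
  have QS: "(Q * Sm n) $$ (k,l) = (if l = 0 then 1 else Q $$ (k,l))" if "k < n" "l < n" for k l
    using that rows by (simp add: mult_Sm[OF Q])
  have Xe: "X $$ (k,l) = (if k = 0 then (Q * Sm n) $$ (0,l) else (Q * Sm n) $$ (k,l) - (Q * Sm n) $$ (0,l))"
    if "k < n" "l < n" for k l
    unfolding X_def using that Q by (intro Sinvm_mult) auto
  have Mrow: "(\<Sum>r<n. M $$ (k,r)) = 1" if "k < n" for k
  proof -
    have "(\<Sum>r<n. M $$ (k,r)) = (\<Sum>r<n. (if k = r then 1 else 0) - Q $$ (k,r) + g r)"
      unfolding M_def using that by (intro sum.cong refl) auto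
    also have "\<dots> = 1 - 1 + 1" using that rows gs
      by (simp add: sum.distrib sum_subtractf)
    finally show ?thesis by simp
  qed
  have MS: "(M * Sm n) $$ (k,l) = (if l = 0 then 1 else M $$ (k,l))" if "k < n" "l < n" for k l
    using that Mrow by (simp add: mult_Sm[OF Mc])
  have Ye: "Y $$ (k,l) = (if k = 0 then (M * Sm n) $$ (0,l) else (M * Sm n) $$ (k,l) - (M * Sm n) $$ (0,l))"
    if "k < n" "l < n" for k l
    unfolding Y_def using that Mc by (intro Sinvm_mult) auto
  have Xcol: "X $$ (k,0) = (if k = 0 then 1 else 0)" if "k < Suc m" for k
  proof -
    have "k < n" "0 < n" using that nm by auto
    thus ?thesis by (simp add: Xe QS)
  qed
  have Ycol: "Y $$ (k,0) = (if k = 0 then 1 else 0)" if "k < Suc m" for k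
  proof -
    have "k < n" "0 < n" using that nm by auto
    thus ?thesis by (simp add: Ye MS)
  qed
  define X4 where "X4 = mat m m (\<lambda>(i,j). X $$ (i+1,j+1))"
  have X4c: "X4 \<in> carrier_mat m m" by (simp add: X4_def)
  have Y4: "mat m m (\<lambda>(i,j). Y $$ (i+1,j+1)) = 1\<^sub>m m - X4"
  proof (rule eq_matI)
    fix i j assume "i < dim_row (1\<^sub>m m - X4)" "j < dim_col (1\<^sub>m m - X4)"
    hence ij: "i < m" "j < m" by (auto simp: X4_def)
    show "mat m m (\<lambda>(i,j). Y $$ (i+1,j+1)) $$ (i,j) = (1\<^sub>m m - X4) $$ (i,j)"
    proof -
      have "i + 1 < n" "j + 1 < n" "0 < n" using ij nm by auto
      thus ?thesis using ij by (simp add: X4_def Ye Xe MS QS, simp add: M_def)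
    qed
  qed (auto simp: X4_def)
  have cpX: "char_poly X = [:-1,1:] * char_poly X4"
    unfolding X4_def by (rule char_poly_first_col) (use Xc nm Xcol in auto)
  have cpY: "char_poly Y = [:-1,1:] * char_poly (1\<^sub>m m - X4)"
    unfolding Y4[symmetric] by (rule char_poly_first_col) (use Yc nm Ycol in auto)
  have simQ: "similar_mat Q X"
  proof (rule similar_matI[of _ _ "Sm n" "Sinvm n" n])
    show "Q = Sm n * X * Sinvm n" unfolding X_def using Q
      by (simp add: Sm_Sinvm_left Sm_Sinvm_right)
  qed (use Q Xc Sm_Sinvm Sinvm_Sm in auto)
  have simM: "similar_mat M Y"
  proof (rule similar_matI[of _ _ "Sm n" "Sinvm n" n])
    show "M = Sm n * Y * Sinvm n" unfolding Y_def using Mc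
      by (simp add: Sm_Sinvm_left Sm_Sinvm_right)
  qed (use Mc Yc Sm_Sinvm Sinvm_Sm in auto)
  have l1: "proots [:-1,1::complex:] = {#1#}"
    using proots_linear_factor[of "-1::complex"] by simp
  have pQ: "proots (char_poly Q) = {#1#} + proots (char_poly X4)"
    unfolding char_poly_similar[OF simQ] cpX
    by (subst proots_mult) (use char_poly_nonzero[OF X4c] l1 in auto)
  have pM: "proots (char_poly M) = {#1#} + image_mset (\<lambda>z. 1 - z) (proots (char_poly X4))"
    unfolding char_poly_similar[OF simM] cpY proots_one_minus[OF X4c, symmetric]
    by (subst proots_mult) (use char_poly_nonzero[of "1\<^sub>m m - X4" m] X4c l1 in auto)
  have "(\<Sum>k<n. N $$ (k,k)) = sum_mset (image_mset (\<lambda>z. 1 / z) (proots (char_poly M)))"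
    by (rule trace_inverse_proots[OF Mc N]) (use MN in \<open>simp add: M_def\<close>)
  also have "\<dots> = 1 + sum_mset (image_mset (\<lambda>z. 1 / (1 - z)) (proots (char_poly X4)))"
    unfolding pM by (simp add: multiset.map_comp comp_def)
  finally show ?thesis unfolding pQ by simp
qed




lemma degvec_entry: "B \<in> carrier_mat n n \<Longrightarrow> k < n \<Longrightarrow> degvec B $ k = (\<Sum>l<n. B $$ (k,l))"
  by (auto simp: degvec_def ones_def scalar_prod_def lessThan_atLeast0 intro!: sum.cong)

lemma trans_mat_carrier: "B \<in> carrier_mat n n \<Longrightarrow> trans_mat B \<in> carrier_mat n n"
  unfolding trans_mat_def by (simp add: mat_diag_mult_left)

lemma trans_mat_entry: "B \<in> carrier_mat n n \<Longrightarrow> k < n \<Longrightarrow> l < n \<Longrightarrow>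
   trans_mat B $$ (k,l) = B $$ (k,l) / degvec B $ k"
  unfolding trans_mat_def by (simp add: mat_diag_mult_left divide_inverse)

lemma trans_mat_rows:
  assumes B: "B \<in> carrier_mat n n" and dp: "\<forall>k<n. degvec B $ k > 0" and k: "k < n"
  shows "(\<Sum>l<n. trans_mat B $$ (k,l)) = 1"
proof -
  have "(\<Sum>l<n. trans_mat B $$ (k,l)) = (\<Sum>l<n. B $$ (k,l)) / degvec B $ k"
    using B k by (simp add: trans_mat_entry sum_divide_distrib)
  thus ?thesis using degvec_entry[OF B k] dp k by auto
qed

lemma pow_nonzero_const:
  fixes Q :: "real mat" and x :: "nat \<Rightarrow> real"
  assumes Q: "Q \<in> carrier_mat n n"
    and step: "\<And>k l. k < n \<Longrightarrow> l < n \<Longrightarrow> Q $$ (k,l) \<noteq> 0 \<Longrightarrow> x k = x l"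
  shows "k < n \<Longrightarrow> l < n \<Longrightarrow> (Q ^\<^sub>m m) $$ (k,l) \<noteq> 0 \<Longrightarrow> x k = x l"
proof (induction m arbitrary: l)
  case 0
  thus ?case using Q by (auto split: if_splits)
next
  case (Suc m)
  have "(Q ^\<^sub>m Suc m) $$ (k,l) = (\<Sum>r<n. (Q ^\<^sub>m m) $$ (k,r) * Q $$ (r,l))"
    using Q Suc.prems by (simp only: pow_mat.simps) (rule mult_entry, auto)
  with Suc.prems obtain r where r: "r < n" "(Q ^\<^sub>m m) $$ (k,r) * Q $$ (r,l) \<noteq> 0"
    by (metis (no_types, lifting) lessThan_iff sum.neutral)
  hence "x k = x r" using Suc.IH[of r] Suc.prems by auto
  also have "x r = x l" using step[of r l] r Suc.prems by auto
  finally show ?case .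
qed




lemma kernel_trivial:
  fixes B :: "real mat" and h :: "real vec" and v :: "real vec"
  assumes B: "B \<in> carrier_mat n n" and Bsym: "transpose_mat B = B"
    and Bnn: "\<forall>k<n. \<forall>l<n. B $$ (k,l) \<ge> 0"
    and dp: "\<forall>k<n. degvec B $ k > 0"
    and irr: "irreducible_mat (trans_mat B)"
    and h: "h \<in> carrier_vec n" and hs: "h \<bullet> ones n = 1"
    and v: "v \<in> carrier_vec n"
    and Mv: "(1\<^sub>m n - trans_mat B + outer (ones n) h) *\<^sub>v v = 0\<^sub>v n"
  shows "v = 0\<^sub>v n"
proof -
  define Q where "Q = trans_mat B"
  define x where "x = (\<lambda>k. v $ k)"
  define d where "d = (\<lambda>k. degvec B $ k)"
  define c where "c = (\<Sum>l<n. h $ l * x l)"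
  have Qc: "Q \<in> carrier_mat n n" unfolding Q_def by (rule trans_mat_carrier[OF B])
  have Qe: "Q $$ (k,l) = B $$ (k,l) / d k" if "k < n" "l < n" for k l
    unfolding Q_def d_def using trans_mat_entry[OF B that] .
  have dpos: "d k > 0" if "k < n" for k using dp that by (simp add: d_def)
  have dsum: "d k = (\<Sum>l<n. B $$ (k,l))" if "k < n" for k using degvec_entry[OF B that] by (simp add: d_def)
  have Bs: "B $$ (k,l) = B $$ (l,k)" if "k < n" "l < n" for k l
    using arg_cong[OF Bsym, of "\<lambda>A. A $$ (l,k)"] that B by auto
  have csum: "(\<Sum>k<n. B $$ (k,l)) = d l" if "l < n" for l
  proof -
    have "(\<Sum>k<n. B $$ (k,l)) = (\<Sum>k<n. B $$ (l,k))" using that by (intro sum.cong refl Bs) auto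
    thus ?thesis using dsum[OF that] by simp
  qed
  have eq1: "x k - (\<Sum>l<n. Q $$ (k,l) * x l) + c = 0" if k: "k < n" for k
  proof -
    have "((1\<^sub>m n - trans_mat B + outer (ones n) h) *\<^sub>v v) $ k = 0" using Mv k by simp
    moreover have "((1\<^sub>m n - trans_mat B + outer (ones n) h) *\<^sub>v v) $ k
       = (\<Sum>l<n. ((if k = l then 1 else 0) - Q $$ (k,l) + h $ l) * x l)"
      using k B v h Qc unfolding Q_def[symmetric]
      by (auto simp: scalar_prod_def outer_def ones_def x_def lessThan_atLeast0 intro!: sum.cong)
    moreover have "(\<Sum>l<n. ((if k = l then 1 else 0) - Q $$ (k,l) + h $ l) * x l)
        = x k - (\<Sum>l<n. Q $$ (k,l) * x l) + c"
    proof -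
      have "(\<Sum>l<n. ((if k = l then 1 else 0) - Q $$ (k,l) + h $ l) * x l)
          = (\<Sum>l<n. (if k = l then x l else 0) - Q $$ (k,l) * x l + h $ l * x l)"
        by (intro sum.cong refl) (auto simp: algebra_simps)
      also have "\<dots> = (\<Sum>l<n. (if k = l then x l else 0)) - (\<Sum>l<n. Q $$ (k,l) * x l) + c"
        unfolding c_def by (simp add: sum.distrib sum_subtractf)
      finally show ?thesis using k by simp
    qed
    ultimately show ?thesis by simp
  qed
  have eq2: "(\<Sum>l<n. B $$ (k,l) * x l) = d k * (x k + c)" if k: "k < n" for k
  proof -
    have "(\<Sum>l<n. B $$ (k,l) * x l) = d k * (\<Sum>l<n. Q $$ (k,l) * x l)"
      using k dpos[OF k] by (simp add: Qe sum_distrib_left)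
    also have "(\<Sum>l<n. Q $$ (k,l) * x l) = x k + c" using eq1[OF k] by simp
    finally show ?thesis .
  qed
  have "(\<Sum>k<n. \<Sum>l<n. B $$ (k,l) * x l) = (\<Sum>l<n. \<Sum>k<n. B $$ (k,l) * x l)"
    by (rule sum.swap)
  also have "\<dots> = (\<Sum>l<n. d l * x l)"
    by (intro sum.cong refl) (simp add: csum sum_distrib_right[symmetric])
  finally have "(\<Sum>k<n. d k * (x k + c)) = (\<Sum>l<n. d l * x l)" using eq2 by simp
  hence "c * (\<Sum>k<n. d k) = 0" by (simp add: algebra_simps sum.distrib sum_distrib_left)
  show ?thesis
  proof (cases "n = 0")
    case True thus ?thesis using v by auto
  next
    case False
    have "(\<Sum>k<n. d k) > 0" using False dpos by (intro sum_pos) auto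
    with \<open>c * (\<Sum>k<n. d k) = 0\<close> have c0: "c = 0" by simp
    have eq3: "(\<Sum>l<n. B $$ (k,l) * x l) = d k * x k" if "k < n" for k using eq2[OF that] c0 by simp
    have t1: "(\<Sum>k<n. \<Sum>l<n. B $$ (k,l) * (x k)^2) = (\<Sum>k<n. d k * (x k)^2)"
      by (intro sum.cong refl) (simp add: dsum sum_distrib_right[symmetric])
    have t2: "(\<Sum>k<n. \<Sum>l<n. B $$ (k,l) * (x k * x l)) = (\<Sum>k<n. d k * (x k)^2)"
    proof (intro sum.cong refl)
      fix k assume "k \<in> {..<n}"
      hence "(\<Sum>l<n. B $$ (k,l) * (x k * x l)) = x k * (\<Sum>l<n. B $$ (k,l) * x l)"
        by (simp add: sum_distrib_left algebra_simps)
      also have "\<dots> = d k * (x k)^2" using eq3 \<open>k \<in> {..<n}\<close> by (simp add: power2_eq_square)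
      finally show "(\<Sum>l<n. B $$ (k,l) * (x k * x l)) = d k * (x k)^2" .
    qed
    have t3: "(\<Sum>k<n. \<Sum>l<n. B $$ (k,l) * (x l)^2) = (\<Sum>k<n. d k * (x k)^2)"
    proof -
      have "(\<Sum>k<n. \<Sum>l<n. B $$ (k,l) * (x l)^2) = (\<Sum>l<n. \<Sum>k<n. B $$ (k,l) * (x l)^2)"
        by (rule sum.swap)
      also have "\<dots> = (\<Sum>l<n. d l * (x l)^2)"
        by (intro sum.cong refl) (simp add: csum sum_distrib_right[symmetric])
      finally show ?thesis .
    qed
    have "(\<Sum>k<n. \<Sum>l<n. B $$ (k,l) * (x k - x l)^2)
       = (\<Sum>k<n. \<Sum>l<n. B $$ (k,l) * (x k)^2) - 2 * (\<Sum>k<n. \<Sum>l<n. B $$ (k,l) * (x k * x l))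
         + (\<Sum>k<n. \<Sum>l<n. B $$ (k,l) * (x l)^2)"
      by (simp add: power2_diff algebra_simps sum.distrib sum_subtractf sum_distrib_left)
    also have "\<dots> = 0" using t1 t2 t3 by simp
    finally have S0: "(\<Sum>k<n. \<Sum>l<n. B $$ (k,l) * (x k - x l)^2) = 0" .
    have nnt: "0 \<le> B $$ (k,l) * (x k - x l)^2" if "k < n" "l < n" for k l
      using Bnn that by simp
    have zero: "B $$ (k,l) * (x k - x l)^2 = 0" if kl: "k < n" "l < n" for k l
    proof -
      have "\<forall>k\<in>{..<n}. (\<Sum>l<n. B $$ (k,l) * (x k - x l)^2) = 0"
        using S0 by (subst sum_nonneg_eq_0_iff[symmetric]) (auto intro!: sum_nonneg nnt)
      hence "(\<Sum>l<n. B $$ (k,l) * (x k - x l)^2) = 0" using kl by auto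
      hence "\<forall>l\<in>{..<n}. B $$ (k,l) * (x k - x l)^2 = 0"
        using kl by (subst sum_nonneg_eq_0_iff[symmetric]) (auto intro!: nnt)
      thus ?thesis using kl by auto
    qed
    have step: "x k = x l" if "k < n" "l < n" "Q $$ (k,l) \<noteq> 0" for k l
    proof -
      have "B $$ (k,l) \<noteq> 0" using that Qe by auto
      with zero[OF that(1,2)] show ?thesis by simp
    qed
    have const: "x k = x 0" if "k < n" for k
    proof -
      have dr: "dim_row Q = n" using Qc by simp
      have "\<forall>k<dim_row Q. \<forall>l<dim_row Q. \<exists>m. (Q ^\<^sub>m m) $$ (k,l) > 0"
        using irr unfolding irreducible_mat_def Q_def by blast
      hence "\<exists>m. (Q ^\<^sub>m m) $$ (k,0) > 0" using that False unfolding dr by blast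
      then obtain m where "(Q ^\<^sub>m m) $$ (k,0) > 0" by blast
      thus ?thesis using pow_nonzero_const[OF Qc step, where k=k and l=0 and m=m] that False by auto
    qed
    have "c = (\<Sum>l<n. h $ l * x 0)" unfolding c_def by (intro sum.cong refl) (metis const lessThan_iff)
    also have "\<dots> = (\<Sum>l<n. h $ l) * x 0" by (simp add: sum_distrib_right)
    also have "(\<Sum>l<n. h $ l) = 1" using hs h by (simp add: scalar_prod_def ones_def lessThan_atLeast0)
    finally have "x 0 = 0" using c0 by simp
    show ?thesis
    proof (rule eq_vecI)
      fix k assume "k < dim_vec (0\<^sub>v n)"
      hence "k < n" by simp
      have "v $ k = x k" by (simp add: x_def)
      also have "\<dots> = 0" using const[of k] \<open>k < n\<close> \<open>x 0 = 0\<close> by simp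
      finally show "v $ k = 0\<^sub>v n $ k" using \<open>k < n\<close> by simp
    qed (use v in auto)
  qed
qed




lemma map_mat_mult_real:
  fixes A B :: "real mat"
  assumes A: "A \<in> carrier_mat nr m" and B: "B \<in> carrier_mat m nc"
  shows "map_mat complex_of_real (A * B) = map_mat complex_of_real A * map_mat complex_of_real B"
proof (rule eq_matI)
  fix k l assume "k < dim_row (map_mat complex_of_real A * map_mat complex_of_real B)"
    "l < dim_col (map_mat complex_of_real A * map_mat complex_of_real B)"
  hence kl: "k < nr" "l < nc" using A B by auto
  have "map_mat complex_of_real (A * B) $$ (k,l) = complex_of_real ((A * B) $$ (k,l))" using kl A B by simp
  also have "(A * B) $$ (k,l) = (\<Sum>r<m. A $$ (k,r) * B $$ (r,l))" using A B kl by (rule mult_entry)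
  also have "complex_of_real \<dots> = (\<Sum>r<m. map_mat complex_of_real A $$ (k,r) * map_mat complex_of_real B $$ (r,l))"
    using A B kl by (simp add: of_real_sum)
  also have "\<dots> = (map_mat complex_of_real A * map_mat complex_of_real B) $$ (k,l)"
    by (rule mult_entry[symmetric]) (use A B kl in auto)
  finally show "map_mat complex_of_real (A * B) $$ (k,l) = (map_mat complex_of_real A * map_mat complex_of_real B) $$ (k,l)" .
qed (use A B in auto)

lemma mat_inv_props:
  fixes M :: "real mat"
  assumes M: "M \<in> carrier_mat n n" and dM: "det M \<noteq> 0"
  shows "mat_inv M \<in> carrier_mat n n \<and> M * mat_inv M = 1\<^sub>m n \<and> mat_inv M * M = 1\<^sub>m n"
proof -
  have "M \<in> Units (ring_mat TYPE(real) n undefined)" by (rule det_non_zero_imp_unit[OF M dM])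
  then obtain B where B: "B \<in> carrier_mat n n" "B * M = 1\<^sub>m n" "M * B = 1\<^sub>m n"
    unfolding Units_def by (auto simp: ring_mat_simps)
  have ex: "\<exists>B. B \<in> carrier_mat (dim_row M) (dim_row M) \<and> inverts_mat M B \<and> inverts_mat B M"
    using B M by (intro exI[of _ B]) (auto simp: inverts_mat_def)
  have "mat_inv M \<in> carrier_mat (dim_row M) (dim_row M) \<and> inverts_mat M (mat_inv M) \<and> inverts_mat (mat_inv M) M"
    unfolding mat_inv_def by (rule someI_ex[OF ex])
  thus ?thesis using M by (auto simp: inverts_mat_def)
qed

lemma mat_inv_unique:
  fixes M C :: "real mat"
  assumes M: "M \<in> carrier_mat n n" and C: "C \<in> carrier_mat n n" and MC: "M * C = 1\<^sub>m n"
  shows "mat_inv M = C"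
proof -
  have "det M * det C = 1" using det_mult[OF M C] MC by simp
  hence dM: "det M \<noteq> 0" by auto
  note Z = mat_inv_props[OF M dM]
  have Zc: "mat_inv M \<in> carrier_mat n n" using Z by blast
  have "mat_inv M = mat_inv M * (M * C)" using MC Zc by simp
  also have "\<dots> = (mat_inv M * M) * C" by (rule assoc_mult_mat[symmetric, of _ n n _ n _ n]) (use Zc M C in auto)
  also have "\<dots> = C" using Z C by simp
  finally show ?thesis .
qed

lemma kemeny_real:
  fixes B :: "real mat" and h :: "real vec"
  assumes B: "B \<in> carrier_mat n n" and Bsym: "transpose_mat B = B"
    and Bnn: "\<forall>k<n. \<forall>l<n. B $$ (k,l) \<ge> 0"
    and dp: "\<forall>k<n. degvec B $ k > 0"
    and irr: "irreducible_mat (trans_mat B)"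
    and h: "h \<in> carrier_vec n" and hs: "h \<bullet> ones n = 1"
    and n: "n > 0"
  shows "mat_inv (1\<^sub>m n - trans_mat B + outer (ones n) h) \<in> carrier_mat n n
    \<and> (1\<^sub>m n - trans_mat B + outer (ones n) h) * mat_inv (1\<^sub>m n - trans_mat B + outer (ones n) h) = 1\<^sub>m n
    \<and> mat_inv (1\<^sub>m n - trans_mat B + outer (ones n) h) * (1\<^sub>m n - trans_mat B + outer (ones n) h) = 1\<^sub>m n
    \<and> kemeny (trans_mat B) = complex_of_real (trace_mat (mat_inv (1\<^sub>m n - trans_mat B + outer (ones n) h))) - 1"
proof -
  define Q where "Q = trans_mat B"
  define M where "M = 1\<^sub>m n - Q + outer (ones n) h"
  have Qc: "Q \<in> carrier_mat n n" unfolding Q_def by (rule trans_mat_carrier[OF B])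
  have Oc: "outer (ones n) h \<in> carrier_mat n n" using h by (simp add: outer_def ones_def)
  have Mc: "M \<in> carrier_mat n n" unfolding M_def using Qc Oc by simp
  have Me: "M $$ (k,l) = (if k = l then 1 else 0) - Q $$ (k,l) + h $ l" if "k < n" "l < n" for k l
    using that Qc h by (simp add: M_def outer_def ones_def)
  have dM: "det M \<noteq> 0"
  proof
    assume "det M = 0"
    then obtain v where v: "v \<in> carrier_vec n" "v \<noteq> 0\<^sub>v n" "M *\<^sub>v v = 0\<^sub>v n"
      using det_0_iff_vec_prod_zero_field[OF Mc] by blast
    have "v = 0\<^sub>v n" by (rule kernel_trivial[OF B Bsym Bnn dp irr h hs v(1)]) (use v(3) in \<open>simp add: M_def Q_def\<close>)
    with v(2) show False by simp
  qed
  define Z where "Z = mat_inv M"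
  note Zp = mat_inv_props[OF Mc dM, folded Z_def]
  have rows: "\<forall>k<n. (\<Sum>l<n. map_mat complex_of_real Q $$ (k,l)) = 1"
  proof (intro allI impI)
    fix k assume k: "k < n"
    have "(\<Sum>l<n. map_mat complex_of_real Q $$ (k,l)) = complex_of_real (\<Sum>l<n. Q $$ (k,l))"
      using Qc k by (simp add: of_real_sum)
    also have "(\<Sum>l<n. Q $$ (k,l)) = 1" unfolding Q_def by (rule trans_mat_rows[OF B dp k])
    finally show "(\<Sum>l<n. map_mat complex_of_real Q $$ (k,l)) = 1" by simp
  qed
  have gs: "(\<Sum>l<n. complex_of_real (h $ l)) = 1"
  proof -
    have "(\<Sum>l<n. h $ l) = 1" using hs h by (simp add: scalar_prod_def ones_def lessThan_atLeast0)
    thus ?thesis by (simp flip: of_real_sum)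
  qed
  have Meq: "mat n n (\<lambda>(k,l). (if k = l then 1 else 0) - map_mat complex_of_real Q $$ (k,l) + complex_of_real (h $ l))
      = map_mat complex_of_real M"
    by (rule eq_matI) (use Mc Qc in \<open>auto simp: Me\<close>)
  have MN: "mat n n (\<lambda>(k,l). (if k = l then 1 else 0) - map_mat complex_of_real Q $$ (k,l) + complex_of_real (h $ l))
      * map_mat complex_of_real Z = 1\<^sub>m n"
    unfolding Meq map_mat_mult_real[OF Mc Zp[THEN conjunct1], symmetric] using Zp
    by (auto intro!: eq_matI)
  have "kemeny Q = (\<Sum>k<n. map_mat complex_of_real Z $$ (k,k)) - 1"
    unfolding kemeny_def
    by (rule kemeny_trace_complex[OF _ n rows gs _ MN]) (use Qc Zp in auto)
  also have "(\<Sum>k<n. map_mat complex_of_real Z $$ (k,k)) = complex_of_real (trace_mat Z)"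
  proof -
    have Zc: "Z \<in> carrier_mat n n" using Zp by blast
    show ?thesis unfolding trace_mat_def of_real_sum using Zc by (intro sum.cong) auto
  qed
  finally show ?thesis using Zp unfolding Z_def M_def Q_def by blast
qed




lemma remove_edge_carrier: "A \<in> carrier_mat n n \<Longrightarrow> remove_edge A i j \<in> carrier_mat n n"
  unfolding remove_edge_def by (simp add: outer_def)

lemma remove_edge_entry:
  assumes A: "A \<in> carrier_mat n n" and k: "k < n" and l: "l < n" and i: "i < n" and j: "j < n"
  shows "remove_edge A i j $$ (k,l) = A $$ (k,l)
     - (if k = i then (if l = j then A $$ (i,j) else 0) else 0)
     - (if k = j then (if l = i then A $$ (i,j) else 0) else 0)"
  using A k l i j unfolding remove_edge_def by (auto simp: outer_def)

lemma pow_row_zero: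
  fixes Q :: "real mat"
  assumes Q: "Q \<in> carrier_mat n n" and z: "\<forall>l<n. Q $$ (i,l) = 0" and i: "i < n"
  shows "l < n \<Longrightarrow> (Q ^\<^sub>m Suc m) $$ (i,l) = 0"
proof (induction m arbitrary: l)
  case 0
  have "(Q ^\<^sub>m Suc 0) = Q" using Q by simp
  thus ?case using z 0 by simp
next
  case (Suc m)
  have "(Q ^\<^sub>m Suc (Suc m)) $$ (i,l) = (\<Sum>r<n. (Q ^\<^sub>m Suc m) $$ (i,r) * Q $$ (r,l))"
    using Q Suc.prems i by (simp only: pow_mat.simps(2)[of Q "Suc m"]) (rule mult_entry, auto)
  also have "\<dots> = 0" using Suc.IH by (intro sum.neutral) auto
  finally show ?case .
qed

lemma irreducible_deg_pos:
  fixes B :: "real mat"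
  assumes B: "B \<in> carrier_mat n n" and Bnn: "\<forall>k<n. \<forall>l<n. B $$ (k,l) \<ge> 0"
    and irr: "irreducible_mat (trans_mat B)" and i: "i < n" and j: "j < n" and ij: "i \<noteq> j"
  shows "degvec B $ i > 0"
proof -
  have ge: "degvec B $ i \<ge> 0" using degvec_entry[OF B i] Bnn i by (auto intro!: sum_nonneg)
  show ?thesis
  proof (rule ccontr)
    assume "\<not> ?thesis"
    with ge have d0: "degvec B $ i = 0" by simp
    have Qc: "trans_mat B \<in> carrier_mat n n" by (rule trans_mat_carrier[OF B])
    have z: "\<forall>l<n. trans_mat B $$ (i,l) = 0" using trans_mat_entry[OF B i] d0 by simp
    have "\<exists>m. (trans_mat B ^\<^sub>m m) $$ (i,j) > 0"
      using irr Qc i j unfolding irreducible_mat_def by auto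
    then obtain m where m: "(trans_mat B ^\<^sub>m m) $$ (i,j) > 0" by blast
    show False
    proof (cases m)
      case 0 thus False using m Qc i j ij by simp
    next
      case (Suc m') thus False using m pow_row_zero[OF Qc z i j, of m'] by simp
    qed
  qed
qed



lemma fi_aux:
  fixes x a dd :: real
  assumes "dd > 0" "dd - a > 0" and that: "b \<longrightarrow> x = a"
  shows "(x - (if b then a else 0)) / (dd - a) = x / dd + a / (dd * (dd - a)) * x - a * (inverse (dd - a) * (if b then 1 else 0))"
proof (cases b)
  case True
  hence x: "x = a" using that by simp
  have "a / dd + a / (dd * (dd - a)) * a - a * inverse (dd - a) = (a * (dd - a) + a * a - a * dd) / (dd * (dd - a))"
    using assms by (simp add: field_simps)
  also have "\<dots> = 0" by (simp add: algebra_simps)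
  finally show ?thesis using True x by simp
next
  case False
  have "x / dd + a / (dd * (dd - a)) * x = (x * (dd - a) + a * x) / (dd * (dd - a))"
    using assms by (simp add: field_simps)
  also have "\<dots> = x / (dd - a)" using assms by (simp add: field_simps)
  finally show ?thesis using False by simp
qed




lemma woodbury:
  fixes M Mh Z Zh U V :: "'a::field mat"
  assumes M: "M \<in> carrier_mat n n" and Z: "Z \<in> carrier_mat n n"
    and Mh: "Mh \<in> carrier_mat n n" and Zh: "Zh \<in> carrier_mat n n"
    and U: "U \<in> carrier_mat n m" and V: "V \<in> carrier_mat m n"
    and ZM: "Z * M = 1\<^sub>m n" and MhZh: "Mh * Zh = 1\<^sub>m n"
    and Mhe: "Mh = M - U * V"
  shows "(1\<^sub>m m - V * Z * U) * (1\<^sub>m m + V * Zh * U) = 1\<^sub>m m"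
proof -
  note cm = mult_carrier_mat[of _ n n _ n] mult_carrier_mat[of _ n n _ m] mult_carrier_mat[of _ n m _ n]
    mult_carrier_mat[of _ n m _ m] mult_carrier_mat[of _ m n _ n] mult_carrier_mat[of _ m n _ m]
    mult_carrier_mat[of _ m m _ n] mult_carrier_mat[of _ m m _ m]
  note am = assoc_mult_mat[of _ n n _ n _ n] assoc_mult_mat[of _ n n _ n _ m]
    assoc_mult_mat[of _ n n _ m _ n] assoc_mult_mat[of _ n n _ m _ m]
    assoc_mult_mat[of _ n m _ n _ n] assoc_mult_mat[of _ n m _ n _ m]
    assoc_mult_mat[of _ n m _ m _ n] assoc_mult_mat[of _ n m _ m _ m]
    assoc_mult_mat[of _ m n _ n _ n] assoc_mult_mat[of _ m n _ n _ m]
    assoc_mult_mat[of _ m n _ m _ n] assoc_mult_mat[of _ m n _ m _ m]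
    assoc_mult_mat[of _ m m _ n _ n] assoc_mult_mat[of _ m m _ n _ m]
    assoc_mult_mat[of _ m m _ m _ n] assoc_mult_mat[of _ m m _ m _ m]
  have UV: "U * V = M - Mh"
  proof -
    have c: "U * V \<in> carrier_mat n n" using U V by simp
    show ?thesis unfolding Mhe by (rule eq_matI) (use c M in auto)
  qed
  have K1: "Z * (U * (V * Zh)) = Zh - Z"
  proof -
    have "Z * (U * (V * Zh)) = Z * ((U * V) * Zh)" using U V Zh Z by (simp add: am cm)
    also have "\<dots> = Z * (M * Zh - Mh * Zh)" unfolding UV using M Mh Zh by (simp add: minus_mult_distrib_mat[of _ n n])
    also have "\<dots> = Z * (M * Zh) - Z * 1\<^sub>m n" unfolding MhZh using M Zh Z by (subst mult_minus_distrib_mat[of Z n n]) auto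
    also have "Z * (M * Zh) = Zh" using Z M Zh ZM by (simp add: am cm flip: assoc_mult_mat[of Z n n M n Zh n])
    finally show ?thesis using Z by simp
  qed
  define G where "G = V * Z * U"
  define H where "H = V * Zh * U"
  have Gc: "G \<in> carrier_mat m m" and Hc: "H \<in> carrier_mat m m" using U V Z Zh by (simp_all add: G_def H_def cm)
  have GH: "G * H = H - G"
  proof -
    have "G * H = V * ((Z * (U * (V * Zh))) * U)" unfolding G_def H_def using U V Z Zh by (simp add: am cm)
    also have "\<dots> = V * ((Zh - Z) * U)" by (simp add: K1)
    also have "\<dots> = V * (Zh * U - Z * U)" using U Zh Z by (simp add: minus_mult_distrib_mat[of _ n n])
    also have "\<dots> = V * (Zh * U) - V * (Z * U)" using U Zh Z V by (intro mult_minus_distrib_mat[of _ m n _ m]) (auto simp: cm)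
    also have "\<dots> = H - G" unfolding G_def H_def using U Zh Z V by (simp add: am cm)
    finally show ?thesis .
  qed
  have "(1\<^sub>m m - G) * (1\<^sub>m m + H) = (1\<^sub>m m - G) * 1\<^sub>m m + (1\<^sub>m m - G) * H"
    using Gc Hc by (intro mult_add_distrib_mat[of _ m m _ m]) auto
  also have "\<dots> = (1\<^sub>m m - G) + (H - G * H)"
    using Gc Hc by (simp add: minus_mult_distrib_mat[of _ m m])
  also have "\<dots> = 1\<^sub>m m" unfolding GH by (rule eq_matI) (use Gc Hc in auto)
  finally show ?thesis unfolding G_def H_def .
qed

lemma woodbury2:
  fixes M Mh Z Wi U V :: "'a::field mat"
  assumes M: "M \<in> carrier_mat n n" and Z: "Z \<in> carrier_mat n n"
    and U: "U \<in> carrier_mat n m" and V: "V \<in> carrier_mat m n" and Wi: "Wi \<in> carrier_mat m m"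
    and MZ: "M * Z = 1\<^sub>m n" and WWi: "(1\<^sub>m m - V * Z * U) * Wi = 1\<^sub>m m"
    and Mhe: "Mh = M - U * V"
  shows "Mh * (Z + Z * U * Wi * V * Z) = 1\<^sub>m n"
proof -
  note cm = mult_carrier_mat[of _ n n _ n] mult_carrier_mat[of _ n n _ m] mult_carrier_mat[of _ n m _ n]
    mult_carrier_mat[of _ n m _ m] mult_carrier_mat[of _ m n _ n] mult_carrier_mat[of _ m n _ m]
    mult_carrier_mat[of _ m m _ n] mult_carrier_mat[of _ m m _ m]
  note am = assoc_mult_mat[of _ n n _ n _ n] assoc_mult_mat[of _ n n _ n _ m]
    assoc_mult_mat[of _ n n _ m _ n] assoc_mult_mat[of _ n n _ m _ m]
    assoc_mult_mat[of _ n m _ n _ n] assoc_mult_mat[of _ n m _ n _ m]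
    assoc_mult_mat[of _ n m _ m _ n] assoc_mult_mat[of _ n m _ m _ m]
    assoc_mult_mat[of _ m n _ n _ n] assoc_mult_mat[of _ m n _ n _ m]
    assoc_mult_mat[of _ m n _ m _ n] assoc_mult_mat[of _ m n _ m _ m]
    assoc_mult_mat[of _ m m _ n _ n] assoc_mult_mat[of _ m m _ n _ m]
    assoc_mult_mat[of _ m m _ m _ n] assoc_mult_mat[of _ m m _ m _ m]
  define G where "G = V * Z * U"
  define T where "T = Wi * (V * Z)"
  define R where "R = Z * U * Wi * V * Z"
  have Gc: "G \<in> carrier_mat m m" using U V Z by (simp add: G_def cm)
  have Tc: "T \<in> carrier_mat m n" using Wi V Z by (simp add: T_def cm)
  have Rc: "R \<in> carrier_mat n n" using Wi V Z U by (simp add: R_def cm)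
  have UVc: "U * V \<in> carrier_mat n n" using U V by (simp add: cm)
  have VZc: "V * Z \<in> carrier_mat m n" using V Z by (simp add: cm)
  have MZX: "M * (Z * X) = X" if "X \<in> carrier_mat n k" for X k
  proof -
    have "M * (Z * X) = (M * Z) * X" by (rule assoc_mult_mat[symmetric, of _ n n _ n _ k]) (use M Z that in auto)
    thus ?thesis using MZ that by simp
  qed
  have MR: "M * R = U * T"
  proof -
    have "M * R = M * (Z * (U * T))" unfolding R_def T_def using M Z U V Wi by (simp add: am cm)
    also have "\<dots> = U * T" by (rule MZX[where k=n]) (use U Tc in \<open>simp add: cm\<close>)
    finally show ?thesis .
  qed
  have UVR: "(U * V) * R = U * (G * T)" unfolding R_def T_def G_def using M Z U V Wi by (simp add: am cm)
  have GT: "T - G * T = V * Z"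
  proof -
    have "T - G * T = (Wi - G * Wi) * (V * Z)" unfolding T_def using Gc Wi VZc
      by (simp add: minus_mult_distrib_mat[of _ m m _ _ n] am cm)
    also have "Wi - G * Wi = (1\<^sub>m m - G) * Wi" using Gc Wi by (simp add: minus_mult_distrib_mat[of _ m m _ _ m])
    also have "\<dots> = 1\<^sub>m m" using WWi unfolding G_def .
    finally show ?thesis using VZc by (simp add: left_mult_one_mat)
  qed
  have MhR: "Mh * R = U * (V * Z)"
  proof -
    have "Mh * R = M * R - (U * V) * R" unfolding Mhe using M UVc Rc by (simp add: minus_mult_distrib_mat[of _ n n _ _ n])
    also have "\<dots> = U * T - U * (G * T)" unfolding MR UVR ..
    also have "\<dots> = U * (T - G * T)" using U Tc Gc by (simp add: mult_minus_distrib_mat[of _ n m _ n] cm)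
    finally show ?thesis unfolding GT .
  qed
  have MhZ: "Mh * Z = 1\<^sub>m n - U * (V * Z)"
  proof -
    have "Mh * Z = M * Z - (U * V) * Z" unfolding Mhe using M UVc Z by (simp add: minus_mult_distrib_mat[of _ n n _ _ n])
    thus ?thesis using MZ U V Z by (simp add: am cm)
  qed
  have "Mh * (Z + R) = Mh * Z + Mh * R"
    using Z Rc Mhe M UVc by (intro mult_add_distrib_mat[of _ n n _ n]) auto
  also have "\<dots> = 1\<^sub>m n" unfolding MhZ MhR
    by (rule eq_matI) (use U VZc in \<open>auto simp: cm\<close>)
  finally show ?thesis unfolding R_def .
qed

lemma trace_step:
  fixes Z U Wi V :: "'a::field mat"
  assumes Z: "Z \<in> carrier_mat n n" and U: "U \<in> carrier_mat n m" and V: "V \<in> carrier_mat m n"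
    and Wi: "Wi \<in> carrier_mat m m"
  shows "(\<Sum>k<n. (Z * U * Wi * V * Z) $$ (k,k)) = (\<Sum>k<m. (Wi * V * Z * Z * U) $$ (k,k))"
proof -
  note cm = mult_carrier_mat[of _ n n _ n] mult_carrier_mat[of _ n n _ m] mult_carrier_mat[of _ n m _ n]
    mult_carrier_mat[of _ n m _ m] mult_carrier_mat[of _ m n _ n] mult_carrier_mat[of _ m n _ m]
    mult_carrier_mat[of _ m m _ n] mult_carrier_mat[of _ m m _ m]
  note am = assoc_mult_mat[of _ n n _ n _ n] assoc_mult_mat[of _ n n _ n _ m]
    assoc_mult_mat[of _ n n _ m _ n] assoc_mult_mat[of _ n n _ m _ m]
    assoc_mult_mat[of _ n m _ n _ n] assoc_mult_mat[of _ n m _ n _ m]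
    assoc_mult_mat[of _ n m _ m _ n] assoc_mult_mat[of _ n m _ m _ m]
    assoc_mult_mat[of _ m n _ n _ n] assoc_mult_mat[of _ m n _ n _ m]
    assoc_mult_mat[of _ m n _ m _ n] assoc_mult_mat[of _ m n _ m _ m]
    assoc_mult_mat[of _ m m _ n _ n] assoc_mult_mat[of _ m m _ n _ m]
    assoc_mult_mat[of _ m m _ m _ n] assoc_mult_mat[of _ m m _ m _ m]
  have e1: "Z * U * Wi * V * Z = (Z * U) * (Wi * V * Z)" using Z U V Wi by (simp add: am cm)
  have e2: "Wi * V * Z * Z * U = (Wi * V * Z) * (Z * U)" using Z U V Wi by (simp add: am cm)
  show ?thesis unfolding e1 e2 by (rule trace_comm) (use Z U V Wi in \<open>simp_all add: cm\<close>)
qed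




theorem theorem4:
  fixes A :: "real mat" and n i j :: nat and h :: "real vec"
  assumes A_carrier: "A \<in> carrier_mat n n"
    and A_sym: "transpose_mat A = A"
    and A_nonneg: "\<forall>k < n. \<forall>l < n. A $$ (k,l) \<ge> 0"
    and d_pos: "\<forall>k < n. degvec A $ k > 0"
    and conn: "connected_graph A"
    and ij: "i < n" "j < n" "i \<noteq> j"
    and aij_pos: "A $$ (i,j) > 0"
    and not_cut: "\<not> cut_edge A i j"
    and h_dim: "h \<in> carrier_vec n"
    and h_sum: "h \<bullet> ones n = 1"
  defines "d \<equiv> degvec A"
  defines "P \<equiv> trans_mat A"
    and "Ph \<equiv> trans_mat (remove_edge A i j)"
    and "U \<equiv> mat_of_cols n [unit_vec n i, unit_vec n j]"
    and "s_i \<equiv> A $$ (i,j) / (d $ i * (d $ i - A $$ (i,j)))"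
    and "s_j \<equiv> A $$ (i,j) / (d $ j * (d $ j - A $$ (i,j)))"
  defines "VT \<equiv> mat_of_rows_list 2 [[s_i, 0], [0, s_j]] * (transpose_mat U * A)
               - A $$ (i,j) \<cdot>\<^sub>m (mat_of_rows_list 2
                   [[0, inverse (d $ i - A $$ (i,j))], [inverse (d $ j - A $$ (i,j)), 0]]
                   * transpose_mat U)"
    and "Z \<equiv> mat_inv (1\<^sub>m n - P + outer (ones n) h)"
  shows "Ph = P + U * VT
       \<and> invertible_mat (1\<^sub>m 2 - VT * Z * U)
       \<and> kemeny_centrality A i j
           = complex_of_real (trace_mat (mat_inv (1\<^sub>m 2 - VT * Z * U) * VT * Z * Z * U))"
proof -
  have n0: "n > 0" using ij by auto
  define a where "a = A $$ (i,j)"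
  define Ah where "Ah = remove_edge A i j"
  have Ahc: "Ah \<in> carrier_mat n n" unfolding Ah_def by (rule remove_edge_carrier[OF A_carrier])
  have Asym: "A $$ (k,l) = A $$ (l,k)" if "k < n" "l < n" for k l
    using arg_cong[OF A_sym, of "\<lambda>X. X $$ (l,k)"] that A_carrier by auto
  have aji: "A $$ (j,i) = a" using Asym[of j i] ij by (simp add: a_def)
  have Ahe: "Ah $$ (k,l) = A $$ (k,l) - (if k = i then (if l = j then a else 0) else 0)
     - (if k = j then (if l = i then a else 0) else 0)" if "k < n" "l < n" for k l
    unfolding Ah_def a_def by (rule remove_edge_entry[OF A_carrier that ij(1,2)])
  have Ahsym: "transpose_mat Ah = Ah"
  proof (rule eq_matI)
    fix k l assume "k < dim_row Ah" "l < dim_col Ah"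
    hence kl: "k < n" "l < n" using Ahc by auto
    show "transpose_mat Ah $$ (k,l) = Ah $$ (k,l)"
      using kl Ahc Ahe[OF kl] Ahe[OF kl(2,1)] Asym[OF kl] aji ij(3) by (auto simp: a_def)
  qed (use Ahc in auto)
  have Ahnn: "\<forall>k<n. \<forall>l<n. Ah $$ (k,l) \<ge> 0"
  proof (intro allI impI)
    fix k l assume kl: "k < n" "l < n"
    show "Ah $$ (k,l) \<ge> 0"
      using Ahe[OF kl] A_nonneg kl aji ij(3) by (auto simp: a_def)
  qed
  have dh: "degvec Ah $ k = d $ k - (if k = i then a else 0) - (if k = j then a else 0)" if k: "k < n" for k
  proof -
    have "degvec Ah $ k = (\<Sum>l<n. A $$ (k,l) - (if k = i then (if l = j then a else 0) else 0)
       - (if k = j then (if l = i then a else 0) else 0))"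
      using degvec_entry[OF Ahc k] Ahe k by simp
    also have "\<dots> = d $ k - (if k = i then a else 0) - (if k = j then a else 0)"
      using k ij by (simp add: sum_subtractf degvec_entry[OF A_carrier k] d_def)
    finally show ?thesis .
  qed
  have irrA: "irreducible_mat (trans_mat A)" using conn unfolding connected_graph_def .
  have irrh: "irreducible_mat (trans_mat Ah)" using not_cut unfolding cut_edge_def connected_graph_def Ah_def by simp
  have dhi: "degvec Ah $ i > 0" by (rule irreducible_deg_pos[OF Ahc Ahnn irrh ij])
  have dhj: "degvec Ah $ j > 0" by (rule irreducible_deg_pos[OF Ahc Ahnn irrh ij(2,1)]) (use ij in auto)
  have dhpos: "\<forall>k<n. degvec Ah $ k > 0"
  proof (intro allI impI)
    fix k assume k: "k < n"
    show "degvec Ah $ k > 0"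
    proof (cases "k = i \<or> k = j")
      case True thus ?thesis using dhi dhj by auto
    next
      case False thus ?thesis using dh[OF k] d_pos k by (simp add: d_def)
    qed
  qed
  have dia: "d $ i - a > 0" using dhi dh[OF ij(1)] ij by simp
  have dja: "d $ j - a > 0" using dhj dh[OF ij(2)] ij by simp
  have dip: "d $ i > 0" "d $ j > 0" using d_pos ij by (auto simp: d_def)
  note KA = kemeny_real[OF A_carrier A_sym A_nonneg d_pos irrA h_dim h_sum n0]
  note KH = kemeny_real[OF Ahc Ahsym Ahnn dhpos irrh h_dim h_sum n0]
  have sum2: "\<And>f :: nat \<Rightarrow> real. (\<Sum>q<2. f q) = f 0 + f 1" by (simp add: numeral_2_eq_2)
  have Uc: "U \<in> carrier_mat n 2" unfolding U_def using mat_of_cols_carrier(1)[of n "[unit_vec n i, unit_vec n j]"] by (simp add: numeral_2_eq_2)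
  have Ue: "U $$ (k,r) = (if r = 0 then (if k = i then 1 else 0) else (if k = j then 1 else 0))"
    if "k < n" "r < 2" for k r
    using that ij unfolding U_def by (auto simp: mat_of_cols_index less_2_cases_iff)
  have UTA: "(transpose_mat U * A) $$ (r,l) = (if r = 0 then A $$ (i,l) else A $$ (j,l))"
    if "r < 2" "l < n" for r l
  proof -
    have "(transpose_mat U * A) $$ (r,l) = (\<Sum>s<n. transpose_mat U $$ (r,s) * A $$ (s,l))"
      using that Uc A_carrier by (intro mult_entry) auto
    also have "\<dots> = (\<Sum>s<n. (if r = 0 then (if s = i then A $$ (s,l) else 0) else (if s = j then A $$ (s,l) else 0)))"
      using that Uc by (intro sum.cong refl) (auto simp: Ue)
    also have "\<dots> = (if r = 0 then A $$ (i,l) else A $$ (j,l))" using ij by (auto simp: sum.delta')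
    finally show ?thesis .
  qed
  have UTe: "transpose_mat U $$ (r,l) = (if r = 0 then (if l = i then 1 else 0) else (if l = j then 1 else 0))"
    if "r < 2" "l < n" for r l using that Uc Ue by simp
  define D2 where "D2 = mat_of_rows_list 2 [[s_i, 0], [0, s_j]]"
  define E2 where "E2 = mat_of_rows_list 2 [[0, inverse (d $ i - A $$ (i,j))], [inverse (d $ j - A $$ (i,j)), 0]]"
  have D2c: "D2 \<in> carrier_mat 2 2" and E2c: "E2 \<in> carrier_mat 2 2"
    by (auto simp: D2_def E2_def mat_of_rows_list_def)
  have VTdef: "VT = D2 * (transpose_mat U * A) - a \<cdot>\<^sub>m (E2 * transpose_mat U)"
    unfolding VT_def D2_def E2_def a_def ..
  have Vc: "VT \<in> carrier_mat 2 n" unfolding VTdef using D2c E2c Uc A_carrier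
    by (metis mult_carrier_mat minus_carrier_mat smult_carrier_mat transpose_carrier_mat)
  have Ve: "VT $$ (r,l) = (if r = 0 then s_i * A $$ (i,l) - a * (inverse (d $ i - a) * (if l = j then 1 else 0))
      else s_j * A $$ (j,l) - a * (inverse (d $ j - a) * (if l = i then 1 else 0)))" if r: "r < 2" and l: "l < n" for r l
  proof -
    have c1: "D2 * (transpose_mat U * A) \<in> carrier_mat 2 n" using D2c Uc A_carrier
      by (metis mult_carrier_mat transpose_carrier_mat)
    have c2: "E2 * transpose_mat U \<in> carrier_mat 2 n" using E2c Uc
      by (metis mult_carrier_mat transpose_carrier_mat)
    have "VT $$ (r,l) = (D2 * (transpose_mat U * A)) $$ (r,l) - a * (E2 * transpose_mat U) $$ (r,l)"
    proof -
      have dd: "dim_row (E2 * transpose_mat U) = 2" "dim_col (E2 * transpose_mat U) = n" using c2 by auto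
      show ?thesis unfolding VTdef using r l dd by (simp only: index_minus_mat index_smult_mat)
    qed
    also have "(D2 * (transpose_mat U * A)) $$ (r,l) = (\<Sum>q<2. D2 $$ (r,q) * (transpose_mat U * A) $$ (q,l))"
      using D2c Uc A_carrier r l by (intro mult_entry) auto
    also have "(E2 * transpose_mat U) $$ (r,l) = (\<Sum>q<2. E2 $$ (r,q) * transpose_mat U $$ (q,l))"
      using E2c Uc r l by (intro mult_entry) auto
    finally show ?thesis using r l
      by (auto simp: sum2 UTA UTe D2_def E2_def mat_of_rows_list_def less_2_cases_iff a_def)
  qed
  have UVe: "(U * VT) $$ (k,l) = (if k = i then VT $$ (0,l) else 0) + (if k = j then VT $$ (1,l) else 0)"
    if "k < n" "l < n" for k l
  proof -
    have "(U * VT) $$ (k,l) = (\<Sum>q<2. U $$ (k,q) * VT $$ (q,l))"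
      using Uc Vc that by (intro mult_entry) auto
    thus ?thesis using that by (simp add: sum2 Ue)
  qed
  have Pc: "P \<in> carrier_mat n n" unfolding P_def by (rule trans_mat_carrier[OF A_carrier])
  have Phc: "Ph \<in> carrier_mat n n" unfolding Ph_def Ah_def[symmetric] by (rule trans_mat_carrier[OF Ahc])
  have UVc: "U * VT \<in> carrier_mat n n" using Uc Vc by (metis mult_carrier_mat)
  have PhPUV: "Ph = P + U * VT"
  proof (rule eq_matI)
    fix k l assume "k < dim_row (P + U * VT)" "l < dim_col (P + U * VT)"
    hence kl: "k < n" "l < n" using UVc by auto
    have Phe: "Ph $$ (k,l) = Ah $$ (k,l) / degvec Ah $ k"
      unfolding Ph_def Ah_def[symmetric] by (rule trans_mat_entry[OF Ahc kl])
    have Pe: "P $$ (k,l) = A $$ (k,l) / d $ k"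
      unfolding P_def d_def by (rule trans_mat_entry[OF A_carrier kl])
    have "Ph $$ (k,l) = P $$ (k,l) + (U * VT) $$ (k,l)"
    proof (cases "k = i")
      case True
      have "Ph $$ (k,l) = (A $$ (i,l) - (if l = j then a else 0)) / (d $ i - a)"
        using True ij unfolding Phe Ahe[OF kl] dh[OF kl(1)] by simp
      also have "\<dots> = A $$ (i,l) / d $ i + s_i * A $$ (i,l) - a * (inverse (d $ i - a) * (if l = j then 1 else 0))"
        unfolding s_i_def a_def[symmetric] by (rule fi_aux[OF dip(1) dia]) (simp add: a_def)
      also have "\<dots> = P $$ (k,l) + (U * VT) $$ (k,l)"
      proof -
        have v0: "VT $$ (0,l) = s_i * A $$ (i,l) - a * (inverse (d $ i - a) * (if l = j then 1 else 0))"
          using Ve[of 0 l] kl by simp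
        show ?thesis using True ij(3) unfolding Pe UVe[OF kl] v0 by simp
      qed
      finally show ?thesis .
    next
      case ki: False
      show ?thesis
      proof (cases "k = j")
        case True
        have "Ph $$ (k,l) = (A $$ (j,l) - (if l = i then a else 0)) / (d $ j - a)"
          using True ij unfolding Phe Ahe[OF kl] dh[OF kl(1)] by simp
        also have "\<dots> = A $$ (j,l) / d $ j + s_j * A $$ (j,l) - a * (inverse (d $ j - a) * (if l = i then 1 else 0))"
          unfolding s_j_def a_def[symmetric] by (rule fi_aux[OF dip(2) dja]) (simp add: aji)
        also have "\<dots> = P $$ (k,l) + (U * VT) $$ (k,l)"
        proof -
          have v1: "VT $$ (1,l) = s_j * A $$ (j,l) - a * (inverse (d $ j - a) * (if l = i then 1 else 0))"
            using Ve[of 1 l] kl by simp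
          show ?thesis using True ki unfolding Pe UVe[OF kl] v1 by simp
        qed
        finally show ?thesis .
      next
        case False
        thus ?thesis using kl ki unfolding Phe Pe UVe[OF kl] Ahe[OF kl] dh[OF kl(1)] by simp
      qed
    qed
    moreover have "(P + U * VT) $$ (k,l) = P $$ (k,l) + (U * VT) $$ (k,l)"
      using kl UVc by (intro index_add_mat(1)) auto
    ultimately show "Ph $$ (k,l) = (P + U * VT) $$ (k,l)" by simp
  qed (use Phc Pc UVc in auto)
  define Om where "Om = outer (ones n) h"
  define M where "M = 1\<^sub>m n - P + Om"
  define Mh where "Mh = 1\<^sub>m n - Ph + Om"
  have Oc: "Om \<in> carrier_mat n n" using h_dim by (simp add: Om_def outer_def ones_def)
  have Mc: "M \<in> carrier_mat n n" unfolding M_def using Oc by simp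
  have Mhc: "Mh \<in> carrier_mat n n" unfolding Mh_def using Oc by simp
  have ZM: "Z \<in> carrier_mat n n" "M * Z = 1\<^sub>m n" "Z * M = 1\<^sub>m n"
    "kemeny P = complex_of_real (trace_mat Z) - 1"
    using KA unfolding Z_def M_def Om_def P_def by auto
  define Zh where "Zh = mat_inv Mh"
  have TPh: "trans_mat Ah = Ph" unfolding Ph_def Ah_def ..
  have ZhMh: "Zh \<in> carrier_mat n n" "Mh * Zh = 1\<^sub>m n" "Zh * Mh = 1\<^sub>m n"
    "kemeny Ph = complex_of_real (trace_mat Zh) - 1"
    using KH unfolding Zh_def Mh_def Om_def TPh by auto
  have Mhe: "Mh = M - U * VT"
  proof (rule eq_matI)
    fix k l assume "k < dim_row (M - U * VT)" "l < dim_col (M - U * VT)"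
    hence kl: "k < n" "l < n" using UVc by auto
    have dims: "dim_row Om = n" "dim_col Om = n" "dim_row Ph = n" "dim_col Ph = n"
      "dim_row P = n" "dim_col P = n" "dim_row (U * VT) = n" "dim_col (U * VT) = n"
      "dim_row (1\<^sub>m n :: real mat) = n" "dim_col (1\<^sub>m n :: real mat) = n"
      "dim_row (1\<^sub>m n - Ph) = n" "dim_col (1\<^sub>m n - Ph) = n"
      "dim_row (1\<^sub>m n - P) = n" "dim_col (1\<^sub>m n - P) = n"
      "dim_row (1\<^sub>m n - P + Om) = n" "dim_col (1\<^sub>m n - P + Om) = n"
      using Oc Phc Pc UVc by auto
    have "Mh $$ (k,l) = (1\<^sub>m n $$ (k,l) - Ph $$ (k,l)) + Om $$ (k,l)"
      unfolding Mh_def using kl by (simp only: index_add_mat index_minus_mat dims)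
    also have "Ph $$ (k,l) = P $$ (k,l) + (U * VT) $$ (k,l)"
      unfolding PhPUV using kl by (simp only: index_add_mat dims)
    also have "(M - U * VT) $$ (k,l) = ((1\<^sub>m n $$ (k,l) - P $$ (k,l)) + Om $$ (k,l)) - (U * VT) $$ (k,l)"
      unfolding M_def using kl by (simp only: index_add_mat index_minus_mat dims)
    ultimately show "Mh $$ (k,l) = (M - U * VT) $$ (k,l)" by simp
  qed (use Mhc UVc in auto)
  define W where "W = 1\<^sub>m 2 - VT * Z * U"
  define Wi where "Wi = 1\<^sub>m 2 + VT * Zh * U"
  have Wc: "W \<in> carrier_mat 2 2" unfolding W_def using Vc ZM(1) Uc by (metis minus_carrier_mat mult_carrier_mat)
  have Wic: "Wi \<in> carrier_mat 2 2" unfolding Wi_def using Vc ZhMh(1) Uc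
    by (metis add_carrier_mat mult_carrier_mat)
  have WWi: "W * Wi = 1\<^sub>m 2" unfolding W_def Wi_def
    by (rule woodbury[OF Mc ZM(1) Mhc ZhMh(1) Uc Vc ZM(3) ZhMh(2) Mhe])
  have WiW: "Wi * W = 1\<^sub>m 2" by (rule mat_mult_left_right_inverse[OF Wc Wic WWi])
  have invW: "invertible_mat W"
    unfolding invertible_mat_def inverts_mat_def using Wc Wic WWi WiW by (intro conjI exI[of _ Wi]) auto
  have mW: "mat_inv W = Wi" by (rule mat_inv_unique[OF Wc Wic WWi])
  have Rc: "Z * U * Wi * VT * Z \<in> carrier_mat n n" using ZM(1) Uc Wic Vc
    by (metis mult_carrier_mat)
  have Zhe: "Zh = Z + Z * U * Wi * VT * Z"
    unfolding Zh_def
    by (rule mat_inv_unique[OF Mhc _ woodbury2[OF Mc ZM(1) Uc Vc Wic ZM(2) _ Mhe]])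
       (use ZM(1) Rc WWi in \<open>simp_all add: W_def\<close>)
  have trZh: "trace_mat Zh = trace_mat Z + trace_mat (Z * U * Wi * VT * Z)"
  proof -
    have "trace_mat Zh = (\<Sum>k<n. Z $$ (k,k) + (Z * U * Wi * VT * Z) $$ (k,k))"
      unfolding trace_mat_def Zhe using ZM(1) Rc by (intro sum.cong) auto
    thus ?thesis unfolding trace_mat_def using ZM(1) Rc by (simp add: sum.distrib)
  qed
  have trR: "trace_mat (Z * U * Wi * VT * Z) = trace_mat (Wi * VT * Z * Z * U)"
  proof -
    have c2: "Wi * VT * Z * Z * U \<in> carrier_mat 2 2" using ZM(1) Uc Wic Vc by (metis mult_carrier_mat)
    have "dim_row (Z * U * Wi * VT * Z) = n" "dim_row (Wi * VT * Z * Z * U) = 2" using Rc c2 by auto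
    thus ?thesis unfolding trace_mat_def using trace_step[OF ZM(1) Uc Vc Wic] by simp
  qed
  have "kemeny_centrality A i j = complex_of_real (trace_mat (Wi * VT * Z * Z * U))"
    unfolding kemeny_centrality_def Ah_def[symmetric] TPh P_def[symmetric] ZhMh(4) ZM(4) trZh trR
    by simp
  thus ?thesis using PhPUV invW mW unfolding W_def by simp
qed



end
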